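(* Let $\Gamma=(N,A,u)$ be a finite game with a unique correlated equilibrium $q^*$. Then $\mathcal{I}=\mathcal{I}_{q^*}=\{\mu\in\Delta A:\mathrm{supp}(\mu)\subseteq\mathrm{supp}(q^* ),\ \mathbb{E}_\mu[\log q^*]=\mathbb{E}_{q^*}[\log q^*]\}$; equivalently (given that $\mathcal{I}$ is the set of directly implementable outcomes), $\mu$ is directly implementable if and only if $\mathrm{supp}(\mu)\subseteq\mathrm{supp}(q^* )$ and $\mathbb{E}_\mu[\log q^*]=\mathbb{E}_{q^*}[\log q^*]$.
   Context: A finite game has finite player set $N$, finite action sets $A_i$, $A=\times_iA_i$, utilities $u_i:A\to\mathbb{R}$. $\mathrm{CE}(\Gamma)$ is the set of correlated equilibria: $p\in\Delta A$ such that for all $i$, all $a_i$ with $\sum_{a_{-i}}p_{a_i,a_{-i}}>0$, all $b\in A_i$, $\sum_{a_{-i}}p_{a_i,a_{-i}}[u_i(a_i,a_{-i})-u_i(b,a_{-i})]\ge0$. For $q\in\Delta A$, $\mathcal{I}_q=\{\mu\in\Delta A:\mathrm{supp}(\mu)\subseteq\mathrm{supp}(q),\ \mathbb{E}_\mu[\log q]=\mathbb{E}_q[\log q]\}$ and $\mathcal{I}=\bigcup_{q\in\mathrm{CE}(\Gamma)}\mathcal{I}_q$ (convention $0\log 0=0$). Direct implementability: with a partially specified data-generating process $(M,\eta,\mathcal{F})$, $M=A$, $\eta\in\Delta A$, $\mathcal{F}\subseteq\{f:A\to\mathbb{R}\}$, the belief $q$ is the unique maximizer of $-\sum_aq_a\log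 q_a$ over $\{q\in\Delta A:\sum_aq_af(a)=\sum_a\eta_af(a)\ \forall f\in\mathcal{F}\}$; $\mu$ is directly implementable if for some such process with $\eta=\mu$ the obedience conditions $\sum_{a_{-i}}q_{a_i,a_{-i}}[u_i(a_i,a_{-i})-u_i(b,a_{-i})]\ge0$ hold for all $i$, all $a_i$ with positive $q$-marginal, all $b\in A_i$. *)

theory Defs
  imports Complex_Main "HOL-Library.FuncSet"
begin

definition profiles :: "'i set \<Rightarrow> ('i \<Rightarrow> 'a set) \<Rightarrow> ('i \<Rightarrow> 'a) set" where
  "profiles N Act = PiE N Act"

definition Delta :: "('i \<Rightarrow> 'a) set \<Rightarrow> (('i \<Rightarrow> 'a) \<Rightarrow> real) set" where
  "Delta P = {p. (\<forall>a\<in>P. 0 \<le> p a) \<and> sum p P = 1 \<and> (\<forall>a. a \<notin> P \<longrightarrow> p a = 0)}"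

definition obedient :: "'i set \<Rightarrow> ('i \<Rightarrow> 'a set) \<Rightarrow> ('i \<Rightarrow> ('i \<Rightarrow> 'a) \<Rightarrow> real)
    \<Rightarrow> (('i \<Rightarrow> 'a) \<Rightarrow> real) \<Rightarrow> bool" where
  "obedient N Act u q \<longleftrightarrow>
     (\<forall>i\<in>N. \<forall>ai\<in>Act i. \<forall>b\<in>Act i.
        (\<Sum>a\<in>{a\<in>profiles N Act. a i = ai}. q a) > 0 \<longrightarrow>
        (\<Sum>a\<in>{a\<in>profiles N Act. a i = ai}. q a * (u i a - u i (a(i := b)))) \<ge> 0)"

definition CE :: "'i set \<Rightarrow> ('i \<Rightarrow> 'a set) \<Rightarrow> ('i \<Rightarrow> ('i \<Rightarrow> 'a) \<Rightarrow> real)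
    \<Rightarrow> (('i \<Rightarrow> 'a) \<Rightarrow> real) set" where
  "CE N Act u = {p \<in> Delta (profiles N Act). obedient N Act u p}"

text \<open>I_q; note ln 0 = 0 in Isabelle, matching the convention 0 log 0 = 0.\<close>
definition I_q :: "('i \<Rightarrow> 'a) set \<Rightarrow> (('i \<Rightarrow> 'a) \<Rightarrow> real) \<Rightarrow> (('i \<Rightarrow> 'a) \<Rightarrow> real) set" where
  "I_q P q = {\<mu> \<in> Delta P. {a\<in>P. \<mu> a \<noteq> 0} \<subseteq> {a\<in>P. q a \<noteq> 0} \<and>
       (\<Sum>a\<in>P. \<mu> a * ln (q a)) = (\<Sum>a\<in>P. q a * ln (q a))}"

definition I_set :: "'i set \<Rightarrow> ('i \<Rightarrow> 'a set) \<Rightarrow> ('i \<Rightarrow> ('i \<Rightarrow> 'a) \<Rightarrow> real)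
    \<Rightarrow> (('i \<Rightarrow> 'a) \<Rightarrow> real) set" where
  "I_set N Act u = (\<Union>q\<in>CE N Act u. I_q (profiles N Act) q)"

definition entropy :: "('i \<Rightarrow> 'a) set \<Rightarrow> (('i \<Rightarrow> 'a) \<Rightarrow> real) \<Rightarrow> real" where
  "entropy P q = - (\<Sum>a\<in>P. q a * ln (q a))"

text \<open>Beliefs consistent with the partially specified process (M = A, eta, F).\<close>
definition consistent :: "('i \<Rightarrow> 'a) set \<Rightarrow> (('i \<Rightarrow> 'a) \<Rightarrow> real) set
    \<Rightarrow> (('i \<Rightarrow> 'a) \<Rightarrow> real) \<Rightarrow> (('i \<Rightarrow> 'a) \<Rightarrow> real) set" where
  "consistent P F \<eta> = {q \<in> Delta P. \<forall>f\<in>F. (\<Sum>a\<in>P. q a * f a) = (\<Sum>a\<in>P. \<eta> a * f a)}"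

definition maxent_belief :: "('i \<Rightarrow> 'a) set \<Rightarrow> (('i \<Rightarrow> 'a) \<Rightarrow> real) set
    \<Rightarrow> (('i \<Rightarrow> 'a) \<Rightarrow> real) \<Rightarrow> (('i \<Rightarrow> 'a) \<Rightarrow> real) \<Rightarrow> bool" where
  "maxent_belief P F \<eta> q \<longleftrightarrow> q \<in> consistent P F \<eta> \<and>
     (\<forall>q'\<in>consistent P F \<eta>. q' \<noteq> q \<longrightarrow> entropy P q' < entropy P q)"

definition directly_implementable :: "'i set \<Rightarrow> ('i \<Rightarrow> 'a set) \<Rightarrow> ('i \<Rightarrow> ('i \<Rightarrow> 'a) \<Rightarrow> real)
    \<Rightarrow> (('i \<Rightarrow> 'a) \<Rightarrow> real) \<Rightarrow> bool" where
  "directly_implementable N Act u \<mu> \<longleftrightarrow> \<mu> \<in> Delta (profiles N Act) \<and>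
     (\<exists>F q. maxent_belief (profiles N Act) F \<mu> q \<and> obedient N Act u q)"

end

theory Submission
  imports Defs
begin

lemma pt_ineq:
  fixes x y :: real assumes "0 \<le> x" "0 < y"
  shows "- x * ln x \<le> - y * ln y + (- ln y - 1) * (x - y)"
    and "x \<noteq> y \<Longrightarrow> - x * ln x < - y * ln y + (- ln y - 1) * (x - y)"
proof -
  have key: "x * (ln y - ln x) \<le> y - x \<and> (x \<noteq> y \<longrightarrow> x * (ln y - ln x) < y - x)"
  proof (cases "x = 0")
    case True then show ?thesis using assms by simp
  next
    case False
    then have xp: "x > 0" using assms by simp
    have l: "ln (y/x) \<le> y/x - 1" using ln_le_minus_one[of "y/x"] xp assms by simp
    have e: "ln (y/x) = ln y - ln x" using xp assms by (simp add: ln_div)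
    have "x * (ln y - ln x) \<le> x * (y/x - 1)" using l e xp by (simp add: mult_left_mono)
    also have "\<dots> = y - x" using xp by (simp add: field_simps)
    finally have 1: "x * (ln y - ln x) \<le> y - x" .
    have 2: "x * (ln y - ln x) < y - x" if "x \<noteq> y"
    proof -
      have "ln (y/x) \<noteq> y/x - 1"
      proof
        assume "ln (y/x) = y/x - 1"
        then have "y/x = 1" using ln_eq_minus_one[of "y/x"] xp assms by simp
        then show False using that xp by simp
      qed
      then have "ln (y/x) < y/x - 1" using l by simp
      then have "x * (ln y - ln x) < x * (y/x - 1)" using e xp by simp
      also have "\<dots> = y - x" using xp by (simp add: field_simps)
      finally show ?thesis .
    qed
    show ?thesis using 1 2 by blast
  qed
  have eq: "- y * ln y + (- ln y - 1) * (x - y) - (- x * ln x) = (y - x) - x * (ln y - ln x)"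
    by (simp add: algebra_simps)
  show "- x * ln x \<le> - y * ln y + (- ln y - 1) * (x - y)" using key eq by linarith
  show "x \<noteq> y \<Longrightarrow> - x * ln x < - y * ln y + (- ln y - 1) * (x - y)" using key eq by linarith
qed

lemma Delta_le1:
  assumes "finite P" "p \<in> Delta P" "a \<in> P" shows "p a \<le> 1" "0 \<le> p a"
proof -
  have "p a \<le> sum p P" using assms by (intro member_le_sum) (auto simp: Delta_def)
  then show "p a \<le> 1" using assms by (simp add: Delta_def)
  show "0 \<le> p a" using assms by (simp add: Delta_def)
qed

lemma qt_Delta:
  assumes "finite P" "q \<in> Delta P" "\<mu> \<in> Delta P" "\<forall>a\<in>P. 0 \<le> q a + t * (\<mu> a - q a)"
  shows "(\<lambda>a. q a + t * (\<mu> a - q a)) \<in> Delta P"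
proof -
  have "(\<Sum>a\<in>P. q a + t * (\<mu> a - q a)) = sum q P + t * (sum \<mu> P - sum q P)"
    by (simp add: sum.distrib sum_subtractf flip: sum_distrib_left)
  then show ?thesis using assms by (auto simp: Delta_def)
qed

lemma ent_bound:
  assumes "finite P" "q \<in> Delta P" "\<mu> \<in> Delta P"
    and pos: "\<forall>a\<in>P. q a + t * (\<mu> a - q a) > 0 \<or> \<mu> a = q a"
  shows "entropy P q - entropy P (\<lambda>a. q a + t * (\<mu> a - q a))
          \<le> t * (\<Sum>a\<in>P. (\<mu> a - q a) * ln (q a + t * (\<mu> a - q a)))"
proof -
  define qt where "qt a = q a + t * (\<mu> a - q a)" for a
  have pw: "- q a * ln (q a) + qt a * ln (qt a) \<le> t * ((\<mu> a - q a) * ln (qt a)) + t * (\<mu> a - q a)"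
    if "a \<in> P" for a
  proof (cases "\<mu> a = q a")
    case True then show ?thesis by (simp add: qt_def)
  next
    case False
    then have "qt a > 0" using pos that by (auto simp: qt_def)
    from pt_ineq(1)[OF _ this, of "q a"] have
      "- q a * ln (q a) \<le> - qt a * ln (qt a) + (- ln (qt a) - 1) * (q a - qt a)"
      using assms that by (simp add: Delta_def)
    moreover have "(- ln (qt a) - 1) * (q a - qt a) = t * ((\<mu> a - q a) * ln (qt a)) + t * (\<mu> a - q a)"
      by (simp add: qt_def algebra_simps)
    ultimately show ?thesis by linarith
  qed
  have "entropy P q - entropy P qt = (\<Sum>a\<in>P. - q a * ln (q a) + qt a * ln (qt a))"
    by (simp add: entropy_def sum.distrib sum_negf sum_subtractf)
  also have "\<dots> \<le> (\<Sum>a\<in>P. t * ((\<mu> a - q a) * ln (qt a)) + t * (\<mu> a - q a))"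
    using pw by (intro sum_mono) auto
  also have "\<dots> = t * (\<Sum>a\<in>P. (\<mu> a - q a) * ln (qt a)) + t * (sum \<mu> P - sum q P)"
    by (simp add: sum.distrib sum_subtractf flip: sum_distrib_left)
  also have "\<dots> = t * (\<Sum>a\<in>P. (\<mu> a - q a) * ln (qt a))"
    using assms by (simp add: Delta_def)
  finally show ?thesis by (simp add: qt_def[abs_def])
qed

lemma maxent_supp:
  assumes fin: "finite P" and qD: "q \<in> Delta P" and mD: "\<mu> \<in> Delta P"
    and maxH: "\<And>t. (\<lambda>a. q a + t * (\<mu> a - q a)) \<in> Delta P \<Longrightarrow>
                  entropy P (\<lambda>a. q a + t * (\<mu> a - q a)) \<le> entropy P q"
    and a0: "a0 \<in> P" "\<mu> a0 \<noteq> 0"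
  shows "q a0 \<noteq> 0"
proof
  assume q0: "q a0 = 0"
  define m0 where "m0 = \<mu> a0"
  have m0p: "m0 > 0" using a0 Delta_le1(2)[OF fin mD a0(1)] by (simp add: m0_def)
  have m01: "m0 \<le> 1" using Delta_le1(1)[OF fin mD a0(1)] by (simp add: m0_def)
  define A1 where "A1 = {a\<in>P. q a > 0}"
  define K where "K = (\<Sum>a\<in>A1. - ln (q a / 2))"
  define t where "t = min (1/2) (exp (- (K + 1) / m0))"
  have tp: "t > 0" and th: "t \<le> 1/2" by (auto simp: t_def)
  have lnt: "m0 * ln t \<le> - (K + 1)"
  proof -
    have "ln t \<le> ln (exp (- (K + 1) / m0))" using tp by (subst ln_le_cancel_iff) (auto simp: t_def)
    then have "ln t \<le> - (K + 1) / m0" by simp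
    then show ?thesis using m0p by (simp add: le_divide_eq mult.commute)
  qed
  define h where "h = (\<Sum>a\<in>P. (\<mu> a - q a) * ln (q a + t * (\<mu> a - q a)))"
  have qge: "0 \<le> q a" "q a \<le> 1" "0 \<le> \<mu> a" "\<mu> a \<le> 1" if "a \<in> P" for a
    using Delta_le1[OF fin qD that] Delta_le1[OF fin mD that] by auto
  have pos: "\<forall>a\<in>P. q a + t * (\<mu> a - q a) > 0 \<or> \<mu> a = q a"
  proof
    fix a assume aP: "a \<in> P"
    have e: "q a + t * (\<mu> a - q a) = (1 - t) * q a + t * \<mu> a" by (simp add: algebra_simps)
    show "q a + t * (\<mu> a - q a) > 0 \<or> \<mu> a = q a"
    proof (cases "q a > 0")
      case True
      then have "(1 - t) * q a > 0" using th by simp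
      moreover have "t * \<mu> a \<ge> 0" using tp qge[OF aP] by simp
      ultimately show ?thesis using e by linarith
    next
      case False
      then have "q a = 0" using qge[OF aP] by simp
      then show ?thesis using tp qge[OF aP] e by (cases "\<mu> a = 0") auto
    qed
  qed
  have nonneg: "\<forall>a\<in>P. 0 \<le> q a + t * (\<mu> a - q a)"
    using pos by (metis add.commute add_0 diff_self less_eq_real_def mult_zero_right qge(1))
  have "entropy P q - entropy P (\<lambda>a. q a + t * (\<mu> a - q a)) \<le> t * h"
    using ent_bound[OF fin qD mD pos] by (simp add: h_def)
  moreover have "entropy P (\<lambda>a. q a + t * (\<mu> a - q a)) \<le> entropy P q"
    using maxH qt_Delta[OF fin qD mD nonneg] by blast
  ultimately have "0 \<le> t * h" by linarith
  then have h0: "0 \<le> h" using tp by (simp add: zero_le_mult_iff)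
  define b where "b a = (if q a > 0 then - ln (q a / 2) else 0) + (if a = a0 then m0 * ln t else 0)" for a
  have tb: "(\<mu> a - q a) * ln (q a + t * (\<mu> a - q a)) \<le> b a" if aP: "a \<in> P" for a
  proof (cases "q a > 0")
    case True
    have ne: "a \<noteq> a0" using True q0 by auto
    define y where "y = q a + t * (\<mu> a - q a)"
    have f1: "t * q a \<le> (1/2) * q a" using th qge[OF aP] by (intro mult_right_mono) auto
    have f2: "t * \<mu> a \<ge> 0" using tp qge[OF aP] by simp
    have f3: "t * \<mu> a \<le> t * 1" using tp qge[OF aP] by (intro mult_left_mono) auto
    have f4: "(1 - t) * q a \<le> (1 - t) * 1" using th qge[OF aP] by (intro mult_left_mono) auto
    have ye: "y = q a - t * q a + t * \<mu> a" unfolding y_def by (simp add: algebra_simps)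
    have y1: "y \<ge> q a / 2" using ye f1 f2 by linarith
    have y2: "y \<le> 1" using ye f3 f4 by (simp add: algebra_simps)
    have ly: "ln (q a / 2) \<le> ln y" "ln y \<le> 0" using y1 y2 True by auto
    have "\<bar>\<mu> a - q a\<bar> \<le> 1" using qge[OF aP] by auto
    then have "(\<mu> a - q a) * ln y \<le> \<bar>\<mu> a - q a\<bar> * \<bar>ln y\<bar>" by (simp add: abs_mult[symmetric])
    also have "\<dots> \<le> 1 * \<bar>ln y\<bar>" using \<open>\<bar>\<mu> a - q a\<bar> \<le> 1\<close> by (intro mult_right_mono) auto
    also have "\<dots> \<le> - ln (q a / 2)" using ly by simp
    finally show ?thesis using True ne by (simp add: b_def y_def)
  next
    case False
    then have qa: "q a = 0" using qge[OF aP] by simp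
    show ?thesis
    proof (cases "a = a0")
      case True
      have "\<mu> a * ln (t * \<mu> a) = m0 * (ln t + ln m0)" using True tp m0p by (simp add: m0_def ln_mult)
      also have "\<dots> \<le> m0 * ln t" using m0p m01 by (simp add: mult_left_mono)
      finally show ?thesis using qa True by (simp add: b_def)
    next
      case False
      have "t * \<mu> a \<le> 1 * 1" using qge[OF aP] tp th by (intro mult_mono) auto
      then have "ln (t * \<mu> a) \<le> 0" using tp qge[OF aP]
        by (cases "\<mu> a = 0") auto
      then have "\<mu> a * ln (t * \<mu> a) \<le> 0" using qge[OF aP] by (simp add: mult_nonneg_nonpos)
      then show ?thesis using qa False by (simp add: b_def)
    qed
  qed
  have "h \<le> sum b P" unfolding h_def using tb by (intro sum_mono) auto
  also have "sum b P = K + m0 * ln t"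
  proof -
    have "sum b P = (\<Sum>a\<in>P. if q a > 0 then - ln (q a / 2) else 0) + (\<Sum>a\<in>P. if a = a0 then m0 * ln t else 0)"
      by (simp add: b_def sum.distrib)
    also have "(\<Sum>a\<in>P. if q a > 0 then - ln (q a / 2) else 0) = K"
      by (simp add: K_def A1_def sum.If_cases fin Int_def)
    also have "(\<Sum>a\<in>P. if a = a0 then m0 * ln t else 0) = m0 * ln t"
      using a0 fin by simp
    finally show ?thesis .
  qed
  finally have "h \<le> K + m0 * ln t" .
  then show False using lnt h0 by linarith
qed

lemma maxent_moment:
  assumes fin: "finite P" and qD: "q \<in> Delta P" and mD: "\<mu> \<in> Delta P"
    and maxH: "\<And>t. (\<lambda>a. q a + t * (\<mu> a - q a)) \<in> Delta P \<Longrightarrow>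
                  entropy P (\<lambda>a. q a + t * (\<mu> a - q a)) \<le> entropy P q"
    and supp: "\<forall>a\<in>P. \<mu> a \<noteq> 0 \<longrightarrow> q a \<noteq> 0"
  shows "(\<Sum>a\<in>P. \<mu> a * ln (q a)) = (\<Sum>a\<in>P. q a * ln (q a))"
proof -
  have qge: "0 \<le> q a" "0 \<le> \<mu> a" if "a \<in> P" for a
    using Delta_le1[OF fin qD that] Delta_le1[OF fin mD that] by auto
  define A1 where "A1 = {a\<in>P. q a > 0}"
  have A1f: "finite A1" using fin by (simp add: A1_def)
  have out: "q a = 0 \<and> \<mu> a = 0" if "a \<in> P" "a \<notin> A1" for a
    using that supp qge[OF that(1)] by (auto simp: A1_def)
  define g where "g t = (\<Sum>a\<in>A1. (\<mu> a - q a) * ln (q a + t * (\<mu> a - q a)))" for t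
  have hP: "(\<Sum>a\<in>P. (\<mu> a - q a) * ln (q a + t * (\<mu> a - q a))) = g t" for t
    unfolding g_def using fin out by (intro sum.mono_neutral_right) (auto simp: A1_def)
  have key: "0 \<le> t * g t" if tpos: "\<forall>a\<in>A1. q a + t * (\<mu> a - q a) > 0" for t
  proof -
    have pos: "\<forall>a\<in>P. q a + t * (\<mu> a - q a) > 0 \<or> \<mu> a = q a"
      using tpos out by (metis)
    have nonneg: "\<forall>a\<in>P. 0 \<le> q a + t * (\<mu> a - q a)"
      using pos by (metis add.commute add_0 diff_self less_eq_real_def mult_zero_right qge(1))
    have "entropy P q - entropy P (\<lambda>a. q a + t * (\<mu> a - q a)) \<le> t * g t"
      using ent_bound[OF fin qD mD pos] by (simp add: hP)
    moreover have "entropy P (\<lambda>a. q a + t * (\<mu> a - q a)) \<le> entropy P q"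
      using maxH qt_Delta[OF fin qD mD nonneg] by blast
    ultimately show ?thesis by linarith
  qed
  have lim: "(g \<longlongrightarrow> g 0) (at 0)"
    unfolding g_def
    by (intro tendsto_intros) (auto simp: A1_def)
  have ev: "eventually (\<lambda>t. \<forall>a\<in>A1. q a + t * (\<mu> a - q a) > 0) (at 0)"
  proof (rule eventually_ball_finite[OF A1f], rule ballI)
    fix a assume "a \<in> A1"
    then have qa: "q a > 0" by (simp add: A1_def)
    have "((\<lambda>t. q a + t * (\<mu> a - q a)) \<longlongrightarrow> q a + 0 * (\<mu> a - q a)) (at (0::real))"
      by (intro tendsto_intros)
    then have "((\<lambda>t. q a + t * (\<mu> a - q a)) \<longlongrightarrow> q a) (at (0::real))" by simp
    from order_tendstoD(1)[OF this qa] show "eventually (\<lambda>t. q a + t * (\<mu> a - q a) > 0) (at 0)" .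
  qed
  have evR: "eventually (\<lambda>t. 0 \<le> g t) (at_right 0)"
  proof -
    have "eventually (\<lambda>t. \<forall>a\<in>A1. q a + t * (\<mu> a - q a) > 0) (at_right 0)"
      using ev by (simp add: eventually_at_split)
    moreover have "eventually (\<lambda>t::real. t > 0) (at_right 0)" by (simp add: eventually_at_filter)
    ultimately show ?thesis
    proof eventually_elim
      case (elim t)
      then have "0 \<le> t * g t" using key by blast
      with elim show ?case by (auto simp: zero_le_mult_iff)
    qed
  qed
  have evL: "eventually (\<lambda>t. g t \<le> 0) (at_left 0)"
  proof -
    have "eventually (\<lambda>t. \<forall>a\<in>A1. q a + t * (\<mu> a - q a) > 0) (at_left 0)"
      using ev by (simp add: eventually_at_split)
    moreover have "eventually (\<lambda>t::real. t < 0) (at_left 0)" by (simp add: eventually_at_filter)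
    ultimately show ?thesis
    proof eventually_elim
      case (elim t)
      then have "0 \<le> t * g t" using key by blast
      with elim show ?case by (auto simp: zero_le_mult_iff)
    qed
  qed
  have limR: "(g \<longlongrightarrow> g 0) (at_right 0)" and limL: "(g \<longlongrightarrow> g 0) (at_left 0)"
    using lim by (auto simp: filterlim_at_split)
  have "0 \<le> g 0" using tendsto_lowerbound[OF limR evR] by simp
  moreover have "g 0 \<le> 0" using tendsto_upperbound[OF limL evL] by simp
  ultimately have "g 0 = 0" by simp
  then have "(\<Sum>a\<in>P. (\<mu> a - q a) * ln (q a)) = 0" using hP[of 0] by simp
  then show ?thesis by (simp add: left_diff_distrib sum_subtractf)
qed

lemma gibbs_max:
  assumes fin: "finite P" and qD: "qs \<in> Delta P" and mI: "\<mu> \<in> I_q P qs"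
  shows "maxent_belief P {(\<lambda>a. if qs a \<noteq> 0 then 1 else 0), (\<lambda>a. ln (qs a))} \<mu> qs"
proof -
  define f1 where "f1 = (\<lambda>a. if qs a \<noteq> 0 then 1 else (0::real))"
  have mD: "\<mu> \<in> Delta P" and msupp: "\<forall>a\<in>P. \<mu> a \<noteq> 0 \<longrightarrow> qs a \<noteq> 0"
    and mom: "(\<Sum>a\<in>P. \<mu> a * ln (qs a)) = (\<Sum>a\<in>P. qs a * ln (qs a))"
    using mI by (auto simp: I_q_def)
  have s1: "(\<Sum>a\<in>P. qs a * f1 a) = 1"
  proof -
    have "(\<Sum>a\<in>P. qs a * f1 a) = sum qs P" by (intro sum.cong) (auto simp: f1_def)
    then show ?thesis using qD by (simp add: Delta_def)
  qed
  have s2: "(\<Sum>a\<in>P. \<mu> a * f1 a) = 1"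
  proof -
    have "(\<Sum>a\<in>P. \<mu> a * f1 a) = sum \<mu> P" using msupp by (intro sum.cong) (auto simp: f1_def)
    then show ?thesis using mD by (simp add: Delta_def)
  qed
  have qcons: "qs \<in> consistent P {f1, (\<lambda>a. ln (qs a))} \<mu>"
    using qD s1 s2 mom by (auto simp: consistent_def)
  have strict: "entropy P q' < entropy P qs"
    if q'c: "q' \<in> consistent P {f1, (\<lambda>a. ln (qs a))} \<mu>" and ne: "q' \<noteq> qs" for q'
  proof -
    have q'D: "q' \<in> Delta P" using q'c by (simp add: consistent_def)
    have c1: "(\<Sum>a\<in>P. q' a * f1 a) = 1" and c2: "(\<Sum>a\<in>P. q' a * ln (qs a)) = (\<Sum>a\<in>P. qs a * ln (qs a))"
      using q'c s2 mom by (auto simp: consistent_def)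
    have q'ge: "0 \<le> q' a" "0 \<le> qs a" if "a \<in> P" for a
      using Delta_le1[OF fin q'D that] Delta_le1[OF fin qD that] by auto
    have "(\<Sum>a\<in>P. q' a * (1 - f1 a)) = sum q' P - (\<Sum>a\<in>P. q' a * f1 a)"
      by (simp add: right_diff_distrib sum_subtractf)
    also have "\<dots> = 0" using c1 q'D by (simp add: Delta_def)
    finally have z: "(\<Sum>a\<in>P. q' a * (1 - f1 a)) = 0" .
    have zero: "q' a = 0" if "a \<in> P" "qs a = 0" for a
    proof -
      have "\<forall>a\<in>P. q' a * (1 - f1 a) = 0"
        using z fin q'ge by (subst sum_nonneg_eq_0_iff[symmetric]) (auto simp: f1_def)
      then show ?thesis using that by (auto simp: f1_def)
    qed
    define R where "R a = - qs a * ln (qs a) + (- ln (qs a) - 1) * (q' a - qs a)" for a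
    have le: "- q' a * ln (q' a) \<le> R a" if "a \<in> P" for a
    proof (cases "qs a = 0")
      case True then show ?thesis using zero[OF that] by (simp add: R_def)
    next
      case False then show ?thesis using pt_ineq(1)[of "q' a" "qs a"] q'ge[OF that] by (simp add: R_def)
    qed
    obtain a where "q' a \<noteq> qs a" using ne by auto
    then have aP: "a \<in> P" using q'D qD unfolding Delta_def by (metis (mono_tags, lifting) mem_Collect_eq)
    have "qs a \<noteq> 0" using zero[OF aP] \<open>q' a \<noteq> qs a\<close> by auto
    then have lt: "- q' a * ln (q' a) < R a"
      using pt_ineq(2)[of "q' a" "qs a"] q'ge[OF aP] \<open>q' a \<noteq> qs a\<close> by (simp add: R_def)
    have "entropy P q' = (\<Sum>a\<in>P. - q' a * ln (q' a))" by (simp add: entropy_def sum_negf)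
    also have "\<dots> < sum R P" using fin le lt aP by (intro sum_strict_mono_ex1) auto
    also have "sum R P = entropy P qs - (\<Sum>a\<in>P. q' a * ln (qs a)) + (\<Sum>a\<in>P. qs a * ln (qs a))
                 - sum q' P + sum qs P"
      by (simp add: R_def entropy_def sum.distrib sum_subtractf sum_negf algebra_simps)
    also have "\<dots> = entropy P qs" using c2 q'D qD by (simp add: Delta_def)
    finally show ?thesis .
  qed
  show ?thesis unfolding maxent_belief_def f1_def[symmetric] using qcons strict by blast
qed

theorem corollary1:
  fixes N :: "'i set" and Act :: "'i \<Rightarrow> 'a set"
    and u :: "'i \<Rightarrow> ('i \<Rightarrow> 'a) \<Rightarrow> real" and qs :: "('i \<Rightarrow> 'a) \<Rightarrow> real"
  assumes "finite N"
    and "\<forall>i\<in>N. finite (Act i) \<and> Act i \<noteq> {}"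
    and "CE N Act u = {qs}"
  shows "I_set N Act u = I_q (profiles N Act) qs
         \<and> (\<forall>\<mu>. directly_implementable N Act u \<mu> \<longleftrightarrow> \<mu> \<in> I_q (profiles N Act) qs)"
proof -
  define P where "P = profiles N Act"
  have fin: "finite P" using assms(1,2) by (simp add: P_def profiles_def finite_PiE)
  have qsCE: "qs \<in> CE N Act u" using assms(3) by simp
  have qD: "qs \<in> Delta P" and qob: "obedient N Act u qs" using qsCE by (auto simp: CE_def P_def)
  have part1: "I_set N Act u = I_q P qs" using assms(3) by (simp add: I_set_def P_def)
  have part2: "directly_implementable N Act u \<mu> \<longleftrightarrow> \<mu> \<in> I_q P qs" for \<mu>
  proof
    assume "directly_implementable N Act u \<mu>"
    then obtain F q where mD: "\<mu> \<in> Delta P" and mb: "maxent_belief P F \<mu> q" and ob: "obedient N Act u q"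
      by (auto simp: directly_implementable_def P_def)
    have qc: "q \<in> consistent P F \<mu>" and qmax: "\<forall>q'\<in>consistent P F \<mu>. q' \<noteq> q \<longrightarrow> entropy P q' < entropy P q"
      using mb by (auto simp: maxent_belief_def)
    have qD': "q \<in> Delta P" using qc by (simp add: consistent_def)
    then have "q \<in> CE N Act u" using ob by (simp add: CE_def P_def)
    then have qq: "q = qs" using assms(3) by simp
    have maxH: "entropy P (\<lambda>a. q a + t * (\<mu> a - q a)) \<le> entropy P q"
      if tD: "(\<lambda>a. q a + t * (\<mu> a - q a)) \<in> Delta P" for t
    proof -
      have "(\<lambda>a. q a + t * (\<mu> a - q a)) \<in> consistent P F \<mu>"
      proof -
        have "(\<Sum>a\<in>P. (q a + t * (\<mu> a - q a)) * f a) = (\<Sum>a\<in>P. \<mu> a * f a)" if "f \<in> F" for f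
        proof -
          have e: "(\<Sum>a\<in>P. q a * f a) = (\<Sum>a\<in>P. \<mu> a * f a)" using qc that by (simp add: consistent_def)
          have "(\<Sum>a\<in>P. (q a + t * (\<mu> a - q a)) * f a)
                = (\<Sum>a\<in>P. q a * f a) + t * ((\<Sum>a\<in>P. \<mu> a * f a) - (\<Sum>a\<in>P. q a * f a))"
            by (simp add: algebra_simps sum.distrib sum_subtractf flip: sum_distrib_left)
          then show ?thesis using e by simp
        qed
        then show ?thesis using tD by (simp add: consistent_def)
      qed
      then show ?thesis using qmax by (cases "(\<lambda>a. q a + t * (\<mu> a - q a)) = q") (auto intro: less_imp_le)
    qed
    have supp: "\<forall>a\<in>P. \<mu> a \<noteq> 0 \<longrightarrow> q a \<noteq> 0"
      using maxent_supp[OF fin qD' mD maxH] by blast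
    have mom: "(\<Sum>a\<in>P. \<mu> a * ln (q a)) = (\<Sum>a\<in>P. q a * ln (q a))"
      using maxent_moment[OF fin qD' mD maxH supp] .
    show "\<mu> \<in> I_q P qs" using mD supp mom qq by (auto simp: I_q_def)
  next
    assume mI: "\<mu> \<in> I_q P qs"
    then have "\<mu> \<in> Delta P" by (simp add: I_q_def)
    then show "directly_implementable N Act u \<mu>"
      using gibbs_max[OF fin qD mI] qob by (auto simp: directly_implementable_def P_def)
  qed
  show ?thesis using part1 part2 by (simp add: P_def)
qed

end
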